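(* Let $\mathcal{A}=\{\mathbf{A},\mathbf{B},\mathbf{C},\mathbf{D}\}$, let $\mathcal{R}^\dagger$ be the symmetric relation on $\mathcal{A}$ whose related pairs are exactly $\{\mathbf{A},\mathbf{B}\}$, $\{\mathbf{B},\mathbf{D}\}$, $\{\mathbf{D},\mathbf{C}\}$, and let $\mathcal{H}$ be the base graph on $\{1,\dots,n\}$ defined as follows: if $n$ is even, $\mathcal{H}$ has edges $\{\sigma(i),\sigma(i+1)\}$, $i=1,\dots,n$ (indices modulo $n$), for some permutation $\sigma$ of $\{1,\dots,n\}$; if $n$ is odd, for a fixed vertex $u$ and a bijection $\sigma$ from $\{1,\dots,n-1\}$ onto $\{1,\dots,n\}\setminus\{u\}$, $\mathcal{H}$ has edges $\{\sigma(i),\sigma(i+1)\}$, $i=1,\dots,n-1$ (indices modulo $n-1$), and $u$ is isolated. Let $\mu_\pm=\frac{1\pm\sqrt5}{2}$. Then there exist at least $(\sqrt2)^{n-1}$ shapes $S$ such that the preimage $P_S=\{v\in\mathcal{A}^n:\mathcal{H}_{\mathcal{R}^\dagger}(v)=S\}$ satisfies: (I) the subgraph of $Q_4^n$ induced by $P_S$ has a connected component with at least $\mu_+^n+\mu_-^n$ vertices; (II) $P_S$ has diameter $n$, i.e. there exist $v,v'\in P_S$ which differ in all $n$ coordinates.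
   Context: $Q_4^n$ is the graph on $\mathcal{A}^n$ in which two sequences are adjacent iff they differ in exactly one coordinate. For $v=(x_1,\dots,x_n)\in\mathcal{A}^n$, its shape $\mathcal{H}_{\mathcal{R}^\dagger}(v)$ is the graph with vertex set $\{1,\dots,n\}$ and edge set $\{\{i,k\}\in E_{\mathcal{H}}:(x_i,x_k)\in\mathcal{R}^\dagger\}$; a shape is any graph of this form. *)

theory Defs
  imports Complex_Main
begin

datatype letter = LA | LB | LC | LD

definition Rdag :: "(letter \<times> letter) set" where
  "Rdag = {(LA,LB),(LB,LA),(LB,LD),(LD,LB),(LD,LC),(LC,LD)}"

text \<open>Vertices of the base graph are 0..n-1 (0-based version of 1..n).
  Sequences in A^n are lists of length n.\<close>
definition words :: "nat \<Rightarrow> letter list set" where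
  "words n = {v. length v = n}"

definition base_edges_even :: "nat \<Rightarrow> (nat \<Rightarrow> nat) \<Rightarrow> nat set set" where
  "base_edges_even n \<sigma> = {{\<sigma> i, \<sigma> ((i + 1) mod n)} | i. i < n}"

definition base_edges_odd :: "nat \<Rightarrow> (nat \<Rightarrow> nat) \<Rightarrow> nat set set" where
  "base_edges_odd n \<sigma> = {{\<sigma> i, \<sigma> ((i + 1) mod (n - 1))} | i. i < n - 1}"

text \<open>Shape of v with respect to base graph edge set EH (vertex set fixed as {0..<n},
  so a shape is determined by its edge set).\<close>
definition shape :: "nat set set \<Rightarrow> letter list \<Rightarrow> nat set set" where
  "shape EH v = {e \<in> EH. \<exists>i k. e = {i, k} \<and> (v ! i, v ! k) \<in> Rdag}"

definition preimage :: "nat \<Rightarrow> nat set set \<Rightarrow> nat set set \<Rightarrow> letter list set" where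
  "preimage n EH S = {v \<in> words n. shape EH v = S}"

definition ham_adj :: "letter list \<Rightarrow> letter list \<Rightarrow> bool" where
  "ham_adj v w \<longleftrightarrow> length v = length w \<and> card {i. i < length v \<and> v ! i \<noteq> w ! i} = 1"

definition component :: "letter list set \<Rightarrow> letter list \<Rightarrow> letter list set" where
  "component P v = {w. (\<lambda>a b. a \<in> P \<and> b \<in> P \<and> ham_adj a b)\<^sup>*\<^sup>* v w}"

definition good_shape :: "nat \<Rightarrow> nat set set \<Rightarrow> nat set set \<Rightarrow> bool" where
  "good_shape n EH S \<longleftrightarrow>
     (\<exists>v \<in> words n. shape EH v = S) \<and>
     (\<exists>v \<in> preimage n EH S.
        real (card (component (preimage n EH S) v)) \<ge> ((1 + sqrt 5) / 2) ^ n + ((1 - sqrt 5) / 2) ^ n) \<and>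
     (\<exists>v \<in> preimage n EH S. \<exists>v' \<in> preimage n EH S. \<forall>i < n. v ! i \<noteq> v' ! i)"

end

theory Submission
  imports Defs
begin

fun ps :: "nat \<Rightarrow> nat \<Rightarrow> nat set set" where
  "ps a 0 = {{}}"
| "ps a (Suc 0) = {{}, {a}}"
| "ps a (Suc (Suc k)) = ps a (Suc k) \<union> insert (a + k + 1) ` ps a k"

fun fc :: "nat \<Rightarrow> nat" where
  "fc 0 = 1" | "fc (Suc 0) = 2" | "fc (Suc (Suc k)) = fc (Suc k) + fc k"

fun lucas :: "nat \<Rightarrow> nat" where
  "lucas 0 = 2" | "lucas (Suc 0) = 1" | "lucas (Suc (Suc k)) = lucas (Suc k) + lucas k"

lemma ps_props: "K \<in> ps a k \<Longrightarrow> K \<subseteq> {a..<a+k} \<and> (\<forall>i. i \<in> K \<longrightarrow> Suc i \<notin> K)"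
proof (induction a k arbitrary: K rule: ps.induct)
  case (1 a) then show ?case by simp
next
  case (2 a) then show ?case by auto
next
  case (3 a k)
  show ?case
  proof (cases "K \<in> ps a (Suc k)")
    case True then show ?thesis using 3(1)[OF True] by fastforce
  next
    case False
    then obtain K' where K': "K' \<in> ps a k" "K = insert (a+k+1) K'" using 3(3) by auto
    from 3(2)[OF K'(1)] K'(2) show ?thesis by auto
  qed
qed

lemma ps_finite: "finite (ps a k)"
  by (induction a k rule: ps.induct) auto

lemma ps_card: "card (ps a k) = fc k"
proof (induction a k rule: ps.induct)
  case (1 a) then show ?case by simp
next
  case (2 a) then show ?case by simp
next
  case (3 a k)
  have d: "ps a (Suc k) \<inter> insert (a + k + 1) ` ps a k = {}"
    using ps_props[of _ a "Suc k"] by fastforce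
  have inj: "inj_on (insert (a + k + 1)) (ps a k)"
  proof (rule inj_onI)
    fix x y assume "x \<in> ps a k" "y \<in> ps a k" "insert (a + k + 1) x = insert (a + k + 1) y"
    moreover have "a+k+1 \<notin> x" "a+k+1 \<notin> y" using ps_props[of x a k] ps_props[of y a k] calculation by auto
    ultimately show "x = y" by (metis insert_ident)
  qed
  have "card (ps a (Suc (Suc k))) = card (ps a (Suc k)) + card (insert (a + k + 1) ` ps a k)"
    using d by (simp add: card_Un_disjoint ps_finite)
  also have "\<dots> = fc (Suc k) + fc k" using 3 card_image[OF inj] by simp
  finally show ?case by simp
qed

definition Cyc :: "nat \<Rightarrow> nat set set" where
  "Cyc m = {K. K \<subseteq> {0..<m} \<and> (\<forall>i<m. \<not> (i \<in> K \<and> (i+1) mod m \<in> K))}"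

lemma lucas_fc: "lucas (k+3) = fc (k+2) + fc k"
proof (induction k rule: fc.induct)
  case 1 then show ?case by (simp add: numeral_eq_Suc)
next
  case 2 then show ?case by (simp add: numeral_eq_Suc)
next
  case (3 k)
  then show ?case by (simp add: numeral_eq_Suc)
qed

lemma Cyc_card: assumes "m \<ge> 2" shows "card (Cyc m) \<ge> lucas m"
proof -
  let ?A = "ps 0 (m-1)" and ?B = "insert (m-1) ` ps 1 (m-3)"
  have sub: "?A \<union> ?B \<subseteq> Cyc m"
  proof
    fix K assume "K \<in> ?A \<union> ?B"
    then show "K \<in> Cyc m"
    proof
      assume "K \<in> ?A"
      from ps_props[OF this] have h: "K \<subseteq> {0..<m-1}" "\<forall>i. i \<in> K \<longrightarrow> Suc i \<notin> K" by auto
      show ?thesis unfolding Cyc_def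
      proof (intro CollectI conjI allI impI)
        show "K \<subseteq> {0..<m}" using h by auto
        fix i assume "i < m"
        show "\<not> (i \<in> K \<and> (i + 1) mod m \<in> K)"
        proof (cases "i + 1 = m")
          case True then show ?thesis using h by auto
        next
          case False then have "(i+1) mod m = Suc i" using \<open>i<m\<close> by simp
          then show ?thesis using h by auto
        qed
      qed
    next
      assume "K \<in> ?B"
      then obtain K' where K': "K' \<in> ps 1 (m-3)" "K = insert (m-1) K'" by auto
      have h0: "K' \<subseteq> {1..<1+(m-3)}" "\<forall>i. i \<in> K' \<longrightarrow> Suc i \<notin> K'" using ps_props[OF K'(1)] by auto
      have "{1..<1+(m-3)} \<subseteq> {1..<m-2}" using assms by auto
      with h0 have h: "K' \<subseteq> {1..<m-2}" "\<forall>i. i \<in> K' \<longrightarrow> Suc i \<notin> K'" by auto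
      show ?thesis unfolding Cyc_def
      proof (intro CollectI conjI allI impI)
        show "K \<subseteq> {0..<m}" using h(1) K'(2) assms by (force simp: subset_iff)
        fix i assume "i < m"
        show "\<not> (i \<in> K \<and> (i + 1) mod m \<in> K)"
        proof (cases "i + 1 = m")
          case True then show ?thesis using h K'(2) assms by auto
        next
          case False then have "(i+1) mod m = Suc i" using \<open>i<m\<close> by simp
          then show ?thesis using h K'(2) assms \<open>i<m\<close> by (force simp: subset_iff)
        qed
      qed
    qed
  qed
  have d: "?A \<inter> ?B = {}" using ps_props[of _ 0 "m-1"] by fastforce
  have inj: "inj_on (insert (m-1)) (ps 1 (m-3))"
  proof (rule inj_onI)
    fix x y assume "x \<in> ps 1 (m-3)" "y \<in> ps 1 (m-3)" "insert (m-1) x = insert (m-1) y"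
    moreover have "m-1 \<notin> x" "m-1 \<notin> y" using ps_props[of x 1 "m-3"] ps_props[of y 1 "m-3"] calculation assms by force+
    ultimately show "x = y" by (metis insert_ident)
  qed
  have fin: "finite (Cyc m)" unfolding Cyc_def
    by (rule finite_subset[of _ "Pow {0..<m}"]) auto
  have "card (?A \<union> ?B) = fc (m-1) + fc (m-3)"
    using d card_image[OF inj] by (simp add: card_Un_disjoint ps_finite ps_card)
  also have "\<dots> = lucas m"
  proof (cases "m = 2")
    case True then show ?thesis by (simp add: numeral_eq_Suc)
  next
    case False
    then obtain k where "m = k + 3" using assms by (metis add.commute le_Suc_ex le_neq_implies_less numeral_eq_Suc plus_1_eq_Suc Suc_leI numeral_2_eq_2 numeral_3_eq_3 add_Suc_right)
    then show ?thesis using lucas_fc[of k] by simp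
  qed
  finally show ?thesis using card_mono[OF fin sub] by simp
qed

lemma Cyc0: "Cyc 0 = {{}}" unfolding Cyc_def by auto

definition lucr :: "nat \<Rightarrow> real" where
  "lucr k = ((1 + sqrt 5) / 2) ^ k + ((1 - sqrt 5) / 2) ^ k"

lemma fibrec: "(a::real) ^ 2 = a + 1 \<Longrightarrow> a ^ Suc (Suc k) = a ^ Suc k + a ^ k"
proof -
  assume h: "a ^ 2 = a + 1"
  have "a ^ Suc (Suc k) = a ^ k * a ^ 2" by (simp add: power_add[symmetric])
  also have "\<dots> = a ^ Suc k + a ^ k" unfolding h by (simp add: algebra_simps)
  finally show ?thesis .
qed

lemma lucas_real: "real (lucas k) = lucr k"
proof (induction k rule: lucas.induct)
  case 1 then show ?case by (simp add: lucr_def)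
next
  case 2 
  have e: "(1 + sqrt 5) / 2 + (1 - sqrt 5) / 2 = (1::real)" by (simp add: add_divide_distrib[symmetric])
  then show ?case by (simp add: lucr_def)
next
  case (3 k)
  have p: "((1 + sqrt 5) / 2) ^ 2 = (1 + sqrt 5) / 2 + 1"
    by (simp add: power2_eq_square field_simps)
  have q: "((1 - sqrt 5) / 2) ^ 2 = (1 - sqrt 5) / 2 + 1"
    by (simp add: power2_eq_square field_simps)
  have "lucr (Suc (Suc k)) = lucr (Suc k) + lucr k"
    unfolding lucr_def fibrec[OF p] fibrec[OF q] by linarith
  then show ?case using 3 by simp
qed

lemma lucas_mono: "k \<ge> 1 \<Longrightarrow> lucas k \<le> lucas (Suc k)"
  by (induction k rule: lucas.induct) auto


lemma Rdag_sym: "(x, y) \<in> Rdag \<longleftrightarrow> (y, x) \<in> Rdag"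
  by (cases x; cases y) (auto simp: Rdag_def)

lemma letter_univ: "(UNIV :: letter set) = {LA, LB, LC, LD}"
  using letter.exhaust by auto

lemma finite_words: "finite (words n)"
proof -
  have "words n = {xs. set xs \<subseteq> UNIV \<and> length xs = n}" unfolding words_def by auto
  moreover have "finite (UNIV :: letter set)" by (simp add: letter_univ)
  ultimately show ?thesis using finite_lists_length_eq[of "UNIV :: letter set" n] by simp
qed

locale cyc =
  fixes n m :: nat and \<sigma> :: "nat \<Rightarrow> nat"
  assumes m_even: "even m" and inj: "inj_on \<sigma> {0..<m}" and img: "\<sigma> ` {0..<m} \<subseteq> {0..<n}"
begin

definition EHc :: "nat set set" where
  "EHc = {{\<sigma> i, \<sigma> ((i+1) mod m)} | i. i < m}"

definition xc :: "nat set \<Rightarrow> nat \<Rightarrow> bool" where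
  "xc X p = (\<exists>i<m. p = \<sigma> i \<and> odd i \<and> i div 2 \<in> X)"

definition wd :: "nat set \<Rightarrow> nat set \<Rightarrow> letter list" where
  "wd X I = map (\<lambda>p. if xc X p then (if p \<in> I then LC else LB) else (if p \<in> I then LA else LD)) [0..<n]"

definition SX :: "nat set \<Rightarrow> nat set set" where
  "SX X = {{\<sigma> i, \<sigma> ((i+1) mod m)} | i. i < m \<and> i div 2 \<in> X}"

definition okI :: "nat set \<Rightarrow> nat set \<Rightarrow> bool" where
  "okI X I = (\<forall>i<m. i div 2 \<in> X \<longrightarrow> \<not> (\<sigma> i \<in> I \<and> \<sigma> ((i+1) mod m) \<in> I))"

definition Ind :: "nat set set" where
  "Ind = {I. I \<subseteq> {0..<n} \<and> (\<forall>i<m. \<not> (\<sigma> i \<in> I \<and> \<sigma> ((i+1) mod m) \<in> I))}"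

lemma sig_lt: "i < m \<Longrightarrow> \<sigma> i < n"
  using img by (meson atLeastLessThan_iff image_subset_iff zero_le)

lemma sig_eq: "i < m \<Longrightarrow> j < m \<Longrightarrow> \<sigma> i = \<sigma> j \<longleftrightarrow> i = j"
  using inj by (auto dest: inj_onD)

lemma xc_sigma: "i < m \<Longrightarrow> xc X (\<sigma> i) \<longleftrightarrow> odd i \<and> i div 2 \<in> X"
  unfolding xc_def using sig_eq by auto

lemma nxt_lt: "i < m \<Longrightarrow> (i+1) mod m < m"
  by simp

lemma nxt_even: "i < m \<Longrightarrow> even i \<Longrightarrow> (i+1) mod m = i + 1"
proof -
  assume "i < m" "even i"
  then have "i + 1 \<noteq> m" using m_even by auto
  then show ?thesis using \<open>i < m\<close> by simp
qed

lemma nxt_odd: "i < m \<Longrightarrow> odd i \<Longrightarrow> even ((i+1) mod m)"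
proof -
  assume "i < m" "odd i"
  show ?thesis
  proof (cases "i + 1 = m")
    case True then show ?thesis by simp
  next
    case False then have "(i+1) mod m = i + 1" using \<open>i < m\<close> by simp
    then show ?thesis using \<open>odd i\<close> by simp
  qed
qed

lemma wd_nth: "p < n \<Longrightarrow> wd X I ! p = (if xc X p then (if p \<in> I then LC else LB) else (if p \<in> I then LA else LD))"
  unfolding wd_def by simp

lemma wd_words: "wd X I \<in> words n"
  unfolding wd_def words_def by simp

lemma rel_edge:
  assumes "i < m"
  shows "((wd X I ! \<sigma> i, wd X I ! \<sigma> ((i+1) mod m)) \<in> Rdag) \<longleftrightarrow>
         (i div 2 \<in> X \<and> \<not> (\<sigma> i \<in> I \<and> \<sigma> ((i+1) mod m) \<in> I))"
proof (cases "even i")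
  case True
  have j: "(i+1) mod m = i + 1" using nxt_even[OF assms True] .
  have jl: "i + 1 < m" using nxt_lt[OF assms] j by simp
  have d: "(i+1) div 2 = i div 2" using True by presburger
  have x1: "\<not> xc X (\<sigma> i)" using xc_sigma[OF assms] True by simp
  have x2: "xc X (\<sigma> (i+1)) \<longleftrightarrow> i div 2 \<in> X" using xc_sigma[OF jl] True d by simp
  show ?thesis unfolding j using x1 x2 sig_lt[OF assms] sig_lt[OF jl]
    by (auto simp: wd_nth Rdag_def)
next
  case False
  let ?j = "(i+1) mod m"
  have jl: "?j < m" using nxt_lt[OF assms] .
  have x1: "xc X (\<sigma> i) \<longleftrightarrow> i div 2 \<in> X" using xc_sigma[OF assms] False by simp
  have x2: "\<not> xc X (\<sigma> ?j)" using xc_sigma[OF jl] nxt_odd[OF assms] False by simp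
  show ?thesis using x1 x2 sig_lt[OF assms] sig_lt[OF jl]
    by (auto simp: wd_nth Rdag_def)
qed

lemma rel_pair:
  assumes "{\<sigma> i, \<sigma> j} = {a, b}"
  shows "((v ! a, v ! b) \<in> Rdag) \<longleftrightarrow> ((v ! \<sigma> i, v ! \<sigma> j) \<in> Rdag)"
  using assms Rdag_sym by (auto simp: doubleton_eq_iff)

lemma shape_wd:
  assumes ok: "okI X I"
  shows "shape EHc (wd X I) = SX X"
proof (rule set_eqI)
  fix e
  have key: "i < m \<Longrightarrow> (\<exists>a b. {\<sigma> i, \<sigma> ((i+1) mod m)} = {a, b} \<and> (wd X I ! a, wd X I ! b) \<in> Rdag)
     \<longleftrightarrow> i div 2 \<in> X" for i
  proof -
    assume i: "i < m"
    have "(\<exists>a b. {\<sigma> i, \<sigma> ((i+1) mod m)} = {a, b} \<and> (wd X I ! a, wd X I ! b) \<in> Rdag)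
      \<longleftrightarrow> (wd X I ! \<sigma> i, wd X I ! \<sigma> ((i+1) mod m)) \<in> Rdag"
      using rel_pair[of i "(i+1) mod m"] by blast
    also have "\<dots> \<longleftrightarrow> i div 2 \<in> X" using rel_edge[OF i] ok i unfolding okI_def by blast
    finally show ?thesis .
  qed
  show "e \<in> shape EHc (wd X I) \<longleftrightarrow> e \<in> SX X"
  proof
    assume "e \<in> shape EHc (wd X I)"
    then obtain i where i: "i < m" "e = {\<sigma> i, \<sigma> ((i+1) mod m)}"
      and r: "\<exists>a b. e = {a, b} \<and> (wd X I ! a, wd X I ! b) \<in> Rdag"
      unfolding shape_def EHc_def by auto
    then have "i div 2 \<in> X" using key[OF i(1)] by auto
    then show "e \<in> SX X" unfolding SX_def using i by auto
  next
    assume "e \<in> SX X"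
    then obtain i where i: "i < m" "e = {\<sigma> i, \<sigma> ((i+1) mod m)}" "i div 2 \<in> X"
      unfolding SX_def by auto
    then have "\<exists>a b. e = {a, b} \<and> (wd X I ! a, wd X I ! b) \<in> Rdag" using key[OF i(1)] by auto
    then show "e \<in> shape EHc (wd X I)" unfolding shape_def EHc_def using i by auto
  qed
qed

lemma wd_pre: "okI X I \<Longrightarrow> wd X I \<in> preimage n EHc (SX X)"
  unfolding preimage_def using wd_words shape_wd by auto

lemma wd_adj:
  assumes "p < n" "p \<notin> F"
  shows "ham_adj (wd X F) (wd X (insert p F))"
proof -
  have "{i. i < length (wd X F) \<and> wd X F ! i \<noteq> wd X (insert p F) ! i} = {p}"
    using assms by (auto simp: wd_nth wd_def[of X F] split: if_splits)
  then show ?thesis unfolding ham_adj_def by (simp add: wd_def)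
qed

lemma okI_mono: "okI X I \<Longrightarrow> J \<subseteq> I \<Longrightarrow> okI X J"
  unfolding okI_def by blast

lemma Ind_ok: "I \<in> Ind \<Longrightarrow> okI X I"
  unfolding Ind_def okI_def by blast

lemma in_comp:
  assumes "finite I" "I \<subseteq> {0..<n}" "okI X I"
  shows "wd X I \<in> component (preimage n EHc (SX X)) (wd X {})"
  using assms
proof (induction I rule: finite_induct)
  case empty
  then show ?case unfolding component_def by simp
next
  case (insert p F)
  have okF: "okI X F" using okI_mono[OF insert.prems(2)] by blast
  have IH: "wd X F \<in> component (preimage n EHc (SX X)) (wd X {})"
    using insert.IH insert.prems okF by blast
  have step: "wd X F \<in> preimage n EHc (SX X) \<and> wd X (insert p F) \<in> preimage n EHc (SX X)
     \<and> ham_adj (wd X F) (wd X (insert p F))"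
    using wd_pre[OF okF] wd_pre[OF insert.prems(2)] wd_adj[of p F X] insert.prems(1) insert.hyps(2) by auto
  show ?case using IH step unfolding component_def
    by (auto intro: rtranclp.rtrancl_into_rtrancl)
qed

lemma comp_sub: "component P v \<subseteq> insert v P"
proof
  fix w assume "w \<in> component P v"
  then have "(\<lambda>a b. a \<in> P \<and> b \<in> P \<and> ham_adj a b)\<^sup>*\<^sup>* v w" unfolding component_def by simp
  then show "w \<in> insert v P" by (induction rule: rtranclp_induct) auto
qed

lemma wd_recover: "I \<subseteq> {0..<n} \<Longrightarrow> {p. p < n \<and> wd X I ! p \<in> {LA, LC}} = I"
  by (auto simp: wd_nth subset_iff split: if_splits)

lemma card_comp:
  "card Ind \<le> card (component (preimage n EHc (SX X)) (wd X {}))"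
proof -
  have sub: "wd X ` Ind \<subseteq> component (preimage n EHc (SX X)) (wd X {})"
  proof
    fix w assume "w \<in> wd X ` Ind"
    then obtain I where I: "I \<in> Ind" "w = wd X I" by auto
    have "finite I" "I \<subseteq> {0..<n}" using I(1) unfolding Ind_def by (auto intro: finite_subset)
    then show "w \<in> component (preimage n EHc (SX X)) (wd X {})" using in_comp Ind_ok[OF I(1)] I(2) by blast
  qed
  have inj: "inj_on (wd X) Ind"
  proof (rule inj_onI)
    fix I J assume "I \<in> Ind" "J \<in> Ind" "wd X I = wd X J"
    then show "I = J" using wd_recover[of I X] wd_recover[of J X] unfolding Ind_def by force
  qed
  have fin: "finite (component (preimage n EHc (SX X)) (wd X {}))"
  proof (rule finite_subset[OF comp_sub])
    show "finite (insert (wd X {}) (preimage n EHc (SX X)))"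
      using finite_words[of n] unfolding preimage_def by (auto intro: finite_subset)
  qed
  show ?thesis using card_mono[OF fin sub] card_image[OF inj] by simp
qed

lemma diam: "\<exists>v\<in>preimage n EHc (SX X). \<exists>v'\<in>preimage n EHc (SX X). \<forall>i<n. v ! i \<noteq> v' ! i"
proof -
  define J where "J = {p. p < n \<and> xc X p}"
  define J' where "J' = {0..<n} - J"
  have okJ: "okI X J" unfolding okI_def
  proof (intro allI impI)
    fix i assume i: "i < m" "i div 2 \<in> X"
    show "\<not> (\<sigma> i \<in> J \<and> \<sigma> ((i + 1) mod m) \<in> J)"
    proof (cases "even i")
      case True then show ?thesis unfolding J_def using xc_sigma[OF i(1)] by auto
    next
      case False then show ?thesis unfolding J_def using xc_sigma[OF nxt_lt[OF i(1)]] nxt_odd[OF i(1)] by auto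
    qed
  qed
  have okJ': "okI X J'" unfolding okI_def
  proof (intro allI impI)
    fix i assume i: "i < m" "i div 2 \<in> X"
    show "\<not> (\<sigma> i \<in> J' \<and> \<sigma> ((i + 1) mod m) \<in> J')"
    proof (cases "even i")
      case True
      have j: "(i+1) mod m = i + 1" using nxt_even[OF i(1) True] .
      have jl: "i + 1 < m" using nxt_lt[OF i(1)] j by simp
      have d: "(i+1) div 2 = i div 2" using True by presburger
      have "xc X (\<sigma> (i+1))" using xc_sigma[OF jl] True d i(2) by simp
      then show ?thesis unfolding J'_def J_def j using sig_lt[OF jl] by auto
    next
      case False
      have "xc X (\<sigma> i)" using xc_sigma[OF i(1)] False i(2) by simp
      then show ?thesis unfolding J'_def J_def using sig_lt[OF i(1)] by auto
    qed
  qed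
  have "\<forall>i<n. wd X J ! i \<noteq> wd X J' ! i" unfolding J'_def J_def by (auto simp: wd_nth)
  then show ?thesis using wd_pre[OF okJ] wd_pre[OF okJ'] by blast
qed

lemma good:
  assumes "lucr n \<le> real (card Ind)"
  shows "good_shape n EHc (SX X)"
proof -
  have p: "wd X {} \<in> preimage n EHc (SX X)" using wd_pre[of X "{}"] unfolding okI_def by simp
  have "lucr n \<le> real (card (component (preimage n EHc (SX X)) (wd X {})))"
    using assms card_comp[of X] by linarith
  then show ?thesis unfolding good_shape_def lucr_def using p diam
    unfolding preimage_def by blast
qed

lemma SX_mem:
  assumes "j < m div 2"
  shows "{\<sigma> (2*j), \<sigma> (2*j+1)} \<in> SX X \<longleftrightarrow> j \<in> X"
proof
  have l: "2*j+1 < m" using assms m_even by presburger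
  assume "{\<sigma> (2*j), \<sigma> (2*j+1)} \<in> SX X"
  then obtain i where i: "i < m" "i div 2 \<in> X" "{\<sigma> (2*j), \<sigma> (2*j+1)} = {\<sigma> i, \<sigma> ((i+1) mod m)}"
    unfolding SX_def by auto
  have "\<sigma> (2*j+1) = \<sigma> i \<or> \<sigma> (2*j) = \<sigma> i" using i(3) by (auto simp: doubleton_eq_iff)
  then have "2*j+1 = i \<or> 2*j = i" using sig_eq[OF l i(1)] sig_eq[of "2*j" i] l i(1) by auto
  then have "i div 2 = j" by auto
  then show "j \<in> X" using i(2) by simp
next
  have l: "2*j+1 < m" using assms m_even by presburger
  assume "j \<in> X"
  then show "{\<sigma> (2*j), \<sigma> (2*j+1)} \<in> SX X" unfolding SX_def using l
    by (intro CollectI exI[of _ "2*j"]) simp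
qed

lemma card_good:
  assumes "lucr n \<le> real (card Ind)"
  shows "2 ^ (m div 2) \<le> card {S. good_shape n EHc S}"
proof -
  have sub: "SX ` Pow {..<m div 2} \<subseteq> {S. good_shape n EHc S}" using good[OF assms] by auto
  have inj: "inj_on SX (Pow {..<m div 2})"
  proof (rule inj_onI)
    fix X Y assume XY: "X \<in> Pow {..<m div 2}" "Y \<in> Pow {..<m div 2}" "SX X = SX Y"
    show "X = Y"
    proof (rule set_eqI)
      fix j show "j \<in> X \<longleftrightarrow> j \<in> Y"
      proof (cases "j < m div 2")
        case True then show ?thesis using SX_mem[OF True, of X] SX_mem[OF True, of Y] XY(3) by simp
      next
        case False then show ?thesis using XY by auto
      qed
    qed
  qed
  have finE: "finite EHc"
  proof -
    have "EHc = (\<lambda>i. {\<sigma> i, \<sigma> ((i+1) mod m)}) ` {..<m}" unfolding EHc_def by auto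
    then show ?thesis by simp
  qed
  have fin: "finite {S. good_shape n EHc S}"
  proof (rule finite_subset[of _ "Pow EHc"])
    show "{S. good_shape n EHc S} \<subseteq> Pow EHc" unfolding good_shape_def shape_def by auto
    show "finite (Pow EHc)" using finE by simp
  qed
  have "card (SX ` Pow {..<m div 2}) = 2 ^ (m div 2)"
    using card_image[OF inj] by (simp add: card_Pow)
  then show ?thesis using card_mono[OF fin sub] by simp
qed

lemma Ind_fin: "finite Ind"
  unfolding Ind_def by (rule finite_subset[of _ "Pow {0..<n}"]) auto

lemma img_Ind: "K \<in> Cyc m \<Longrightarrow> \<sigma> ` K \<in> Ind"
proof -
  assume K: "K \<in> Cyc m"
  have mem: "i < m \<Longrightarrow> \<sigma> i \<in> \<sigma> ` K \<longleftrightarrow> i \<in> K" for i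
    using K sig_eq unfolding Cyc_def by auto
  show ?thesis unfolding Ind_def using K img mem unfolding Cyc_def by auto
qed

lemma card_Ind_even: "card (Cyc m) \<le> card Ind"
proof -
  have inj: "inj_on ((`) \<sigma>) (Cyc m)"
    using inj_on_image_Pow[OF inj] by (rule inj_on_subset) (auto simp: Cyc_def)
  have "(`) \<sigma> ` Cyc m \<subseteq> Ind" using img_Ind by auto
  then show ?thesis using card_mono[OF Ind_fin] card_image[OF inj] by metis
qed

lemma card_Ind_odd:
  assumes u: "u < n" "u \<notin> \<sigma> ` {0..<m}"
  shows "2 * card (Cyc m) \<le> card Ind"
proof -
  have inj: "inj_on ((`) \<sigma>) (Cyc m)"
    using inj_on_image_Pow[OF inj] by (rule inj_on_subset) (auto simp: Cyc_def)
  have uK: "K \<in> Cyc m \<Longrightarrow> u \<notin> \<sigma> ` K" for K using u unfolding Cyc_def by auto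
  have inj2: "inj_on (\<lambda>K. insert u (\<sigma> ` K)) (Cyc m)"
  proof (rule inj_onI)
    fix K L assume KL: "K \<in> Cyc m" "L \<in> Cyc m" "insert u (\<sigma> ` K) = insert u (\<sigma> ` L)"
    then have "\<sigma> ` K = \<sigma> ` L" using uK[OF KL(1)] uK[OF KL(2)] by (metis insert_ident)
    then show "K = L" using inj KL(1,2) by (auto dest: inj_onD)
  qed
  have sub1: "(`) \<sigma> ` Cyc m \<subseteq> Ind" using img_Ind by auto
  have sub2: "(\<lambda>K. insert u (\<sigma> ` K)) ` Cyc m \<subseteq> Ind"
  proof
    fix I assume "I \<in> (\<lambda>K. insert u (\<sigma> ` K)) ` Cyc m"
    then obtain K where K: "K \<in> Cyc m" "I = insert u (\<sigma> ` K)" by auto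
    have ne: "i < m \<Longrightarrow> \<sigma> i \<noteq> u" for i using u by auto
    have "\<sigma> ` K \<in> Ind" using img_Ind[OF K(1)] .
    then show "I \<in> Ind" unfolding Ind_def K(2) using u(1) ne by auto
  qed
  have disj: "(`) \<sigma> ` Cyc m \<inter> (\<lambda>K. insert u (\<sigma> ` K)) ` Cyc m = {}" using uK by (auto, metis insertI1)
  have finC: "finite (Cyc m)" unfolding Cyc_def by (rule finite_subset[of _ "Pow {0..<m}"]) auto
  have "card ((`) \<sigma> ` Cyc m \<union> (\<lambda>K. insert u (\<sigma> ` K)) ` Cyc m) = 2 * card (Cyc m)"
    using disj card_image[OF inj] card_image[OF inj2] finC by (simp add: card_Un_disjoint)
  moreover have "card ((`) \<sigma> ` Cyc m \<union> (\<lambda>K. insert u (\<sigma> ` K)) ` Cyc m) \<le> card Ind"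
    using sub1 sub2 by (intro card_mono[OF Ind_fin]) auto
  ultimately show ?thesis by simp
qed

end

lemma sqrt2_bound: "sqrt 2 ^ (n - 1) \<le> (2::real) ^ (n div 2)"
proof -
  have "sqrt 2 ^ (n - 1) \<le> sqrt 2 ^ (2 * (n div 2))"
    by (rule power_increasing) auto
  also have "\<dots> = 2 ^ (n div 2)" by (simp add: power_mult)
  finally show ?thesis .
qed

theorem theorem2:
  fixes n :: nat and \<sigma> :: "nat \<Rightarrow> nat" and u :: nat and EH :: "nat set set"
  assumes "n \<ge> 1"
    and "(even n \<and> bij_betw \<sigma> {0..<n} {0..<n} \<and> EH = base_edges_even n \<sigma>) \<or>
         (odd n \<and> u < n \<and> bij_betw \<sigma> {0..<n-1} ({0..<n} - {u}) \<and> EH = base_edges_odd n \<sigma>)"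
  shows "real (card {S. good_shape n EH S}) \<ge> sqrt 2 ^ (n - 1)"
  using assms(2)
proof
  assume h: "even n \<and> bij_betw \<sigma> {0..<n} {0..<n} \<and> EH = base_edges_even n \<sigma>"
  interpret c: cyc n n \<sigma> using h by unfold_locales (auto simp: bij_betw_def)
  have EH: "EH = c.EHc" using h unfolding base_edges_even_def c.EHc_def by simp
  have ev: "even n" using h by simp
  have n2: "n \<ge> 2" using ev assms(1) by presburger
  have "lucr n = real (lucas n)" by (simp add: lucas_real)
  also have "\<dots> \<le> real (card (Cyc n))" using Cyc_card[OF n2] by simp
  also have "\<dots> \<le> real (card c.Ind)" using c.card_Ind_even by simp
  finally have "2 ^ (n div 2) \<le> card {S. good_shape n EH S}" using c.card_good EH by simp
  then have "(2::real) ^ (n div 2) \<le> real (card {S. good_shape n EH S})"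
    by (metis of_nat_le_iff of_nat_numeral of_nat_power)
  then show ?thesis using sqrt2_bound[of n] by linarith
next
  assume h: "odd n \<and> u < n \<and> bij_betw \<sigma> {0..<n-1} ({0..<n} - {u}) \<and> EH = base_edges_odd n \<sigma>"
  interpret c: cyc n "n-1" \<sigma> using h by unfold_locales (auto simp: bij_betw_def)
  have EH: "EH = c.EHc" using h unfolding base_edges_odd_def c.EHc_def by simp
  have od: "odd n" using h by simp
  have uo: "u \<notin> \<sigma> ` {0..<n-1}" using h by (auto simp: bij_betw_def)
  have "lucas n \<le> 2 * card (Cyc (n-1))"
  proof (cases "n = 1")
    case True then show ?thesis by (simp add: Cyc0)
  next
    case False
    then have m2: "n - 1 \<ge> 2" using od assms(1) by presburger
    obtain k where k: "n = Suc (Suc k)" using m2 by (metis Suc_diff_Suc diff_0_eq_0 le_Suc_ex numeral_2_eq_2 plus_1_eq_Suc add.commute Suc_pred' assms(1) less_le_trans zero_less_Suc Suc_le_eq)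
    have "lucas n = lucas (Suc k) + lucas k" using k by simp
    also have "\<dots> \<le> 2 * lucas (Suc k)" using lucas_mono[of k] m2 k by simp
    also have "\<dots> \<le> 2 * card (Cyc (n-1))" using Cyc_card[OF m2] k by simp
    finally show ?thesis .
  qed
  then have "lucr n \<le> real (card c.Ind)"
    using c.card_Ind_odd[OF _ uo] h lucas_real[of n] by (metis of_nat_le_iff order_trans)
  then have "2 ^ ((n-1) div 2) \<le> card {S. good_shape n EH S}" using c.card_good EH by simp
  moreover have "(n-1) div 2 = n div 2" using od by presburger
  ultimately have "(2::real) ^ (n div 2) \<le> real (card {S. good_shape n EH S})"
    by (metis of_nat_le_iff of_nat_numeral of_nat_power)
  then show ?thesis using sqrt2_bound[of n] by linarith
qed

end
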